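(* Assume $\eta$ is supported on $\{\mathbf{x}\in E:|\mathbf{x}|_\infty\le R\}$ for some $R>0$. Let $\rho$ be a Borel probability measure on $\mathsf{X}$ and let $Y$ be a discrete-time Markov process on $\mathsf{X}$ with transition kernel $\mu$ and $Y_0\sim\rho$. Let $k$ be a nonnegative integer. Then $g(Y_{k+1})\le g(Y_k)+R$ almost surely, and consequently $g(Y_k)\le g(Y_0)+kR$ almost surely.
   Context: Fix $\theta_a,\theta_d>0$, positive integers $n,N$, $E=\mathbb{R}^N$ with the $\infty$-norm $|\cdot|_\infty$, and a Borel probability measure $\eta$ on $E$ with finite mean. $[k]=\{0,\dots,k-1\}$; $|\psi|=\sum_{i\in[n]}\psi(i)$. State space: $\mathsf{X}=\{(\psi,\mathbf{v})\in\{0,1\}^{[n]}\times E^{[n+1]}:\sum_{i\in[n]}\psi(i)(\mathbf{v}(i)-\mathbf{v}(n))=0\}$ (subspace of the product topology, discrete on $\{0,1\}$, Euclidean on $E$). For $i\in[n]$: $r_i(\psi)=\frac{\theta_d\psi(i)+\theta_a(1-\psi(i))}{\theta_d|\psi|+\theta_a(n-|\psi|)}$; $s_i(\psi)$ agrees with $\psi$ except $s_i(\psi)(i)=1-\psi(i)$. For $\mathsf{x}=(\psi,\mathbf{v})\in\mathsf{X}$, $\lambda_i^{\mathsf{x}}$ is the law of $(s_i(\psi),\mathbf{w})$ with $\mathbf{w}(j)=\mathbf{v}(j)$ for $j\in[n]\setminus\{i\}$ and $(\mathbf{w}(i),\mathbf{w}(n))$ equal to $(\mathbf{v}(i),\mathbf{v}(n))$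 if $|\psi|=\psi(i)=1$; $(\mathbf{v}(i),\mathbf{v}(n)-\frac{\mathbf{v}(i)-\mathbf{v}(n)}{|\psi|-1})$ if $|\psi|>\psi(i)=1$; $(\mathbf{x}+\mathbf{v}(n),\frac{\mathbf{x}}{|\psi|+1}+\mathbf{v}(n))$ with $\mathbf{x}\sim\eta$ if $\psi(i)=0$. $\mu(\mathsf{x},B)=\sum_{i\in[n]}r_i(\psi)\lambda_i^{\mathsf{x}}(B)$. $f_i(\psi,\mathbf{v})=\mathbf{v}(i)$ for $i\in[n+1]$, and $g(\mathsf{x})=\max\{|f_i(\mathsf{x})|_\infty:i\in[n+1]\}$. *)

theory Defs
  imports "HOL-Probability.Probability"
begin

text \<open>States: pairs (psi, v) with psi : [n] -> {0,1} (nat-valued, extensional on {..<n})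
  and v : [n+1] -> E (extensional on {..n}), E = real^'N with the infinity norm (infnorm).\<close>

definition Psi :: "nat \<Rightarrow> (nat \<Rightarrow> nat) set" where
  "Psi n = {..<n} \<rightarrow>\<^sub>E {0, 1}"

definition psize :: "nat \<Rightarrow> (nat \<Rightarrow> nat) \<Rightarrow> nat" where
  "psize n \<psi> = (\<Sum>i<n. \<psi> i)"

definition Xset :: "nat \<Rightarrow> ((nat \<Rightarrow> nat) \<times> (nat \<Rightarrow> real^'N)) set" where
  "Xset n = {(\<psi>, v). \<psi> \<in> Psi n \<and> v \<in> {..n} \<rightarrow>\<^sub>E UNIV \<and>
                     (\<Sum>i<n. real (\<psi> i) *\<^sub>R (v i - v n)) = 0}"

definition SX :: "nat \<Rightarrow> ((nat \<Rightarrow> nat) \<times> (nat \<Rightarrow> real^'N)) measure" where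
  "SX n = restrict_space (count_space (Psi n) \<Otimes>\<^sub>M (\<Pi>\<^sub>M i\<in>{..n}. (borel :: (real^'N) measure))) (Xset n)"

definition rate :: "real \<Rightarrow> real \<Rightarrow> nat \<Rightarrow> (nat \<Rightarrow> nat) \<Rightarrow> nat \<Rightarrow> real" where
  "rate \<theta>a \<theta>d n \<psi> i =
     (\<theta>d * real (\<psi> i) + \<theta>a * (1 - real (\<psi> i))) /
     (\<theta>d * real (psize n \<psi>) + \<theta>a * (real n - real (psize n \<psi>)))"

definition flip :: "nat \<Rightarrow> (nat \<Rightarrow> nat) \<Rightarrow> (nat \<Rightarrow> nat)" where
  "flip i \<psi> = \<psi>(i := 1 - \<psi> i)"

definition step :: "nat \<Rightarrow> nat \<Rightarrow> (nat \<Rightarrow> nat) \<times> (nat \<Rightarrow> real^'N) \<Rightarrow> real^'N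
                     \<Rightarrow> (nat \<Rightarrow> nat) \<times> (nat \<Rightarrow> real^'N)" where
  "step n i st x = (let \<psi> = fst st; v = snd st; s = psize n \<psi> in
     (flip i \<psi>,
      (if \<psi> i = 1 \<and> s = 1 then v
       else if \<psi> i = 1 \<and> s > 1 then
         v(n := v n - (1 / (real s - 1)) *\<^sub>R (v i - v n))
       else v(i := x + v n, n := (1 / (real s + 1)) *\<^sub>R x + v n))))"

text \<open>Transition kernel mu(x, B) = sum_i r_i(psi) lambda_i^x(B), where lambda_i^x is the
  law of step n i x under eta.\<close>
definition kernel :: "real \<Rightarrow> real \<Rightarrow> (real^'N) measure \<Rightarrow> nat
     \<Rightarrow> (nat \<Rightarrow> nat) \<times> (nat \<Rightarrow> real^'N) \<Rightarrow> ((nat \<Rightarrow> nat) \<times> (nat \<Rightarrow> real^'N)) set \<Rightarrow> real" where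
  "kernel \<theta>a \<theta>d \<eta> n st B =
     (\<Sum>i<n. rate \<theta>a \<theta>d n (fst st) i * measure \<eta> {x \<in> space \<eta>. step n i st x \<in> B})"

definition gmax :: "nat \<Rightarrow> (nat \<Rightarrow> nat) \<times> (nat \<Rightarrow> real^'N) \<Rightarrow> real" where
  "gmax n st = Max ((\<lambda>i. infnorm (snd st i)) ` {..n})"

definition markov_process ::
  "'w measure \<Rightarrow> 's measure \<Rightarrow> ('s \<Rightarrow> 's set \<Rightarrow> real) \<Rightarrow> 's measure \<Rightarrow> (nat \<Rightarrow> 'w \<Rightarrow> 's) \<Rightarrow> bool" where
  "markov_process M S K \<rho> Y \<longleftrightarrow>
     prob_space M \<and> (\<forall>k. Y k \<in> M \<rightarrow>\<^sub>M S) \<and> distr M S (Y 0) = \<rho> \<and>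
     (\<forall>k. \<forall>A \<in> sets (\<Pi>\<^sub>M i\<in>{..k}. S). \<forall>B \<in> sets S.
        measure M {\<omega> \<in> space M. (\<lambda>i\<in>{..k}. Y i \<omega>) \<in> A \<and> Y (Suc k) \<omega> \<in> B} =
        (LINT \<omega>:{\<omega> \<in> space M. (\<lambda>i\<in>{..k}. Y i \<omega>) \<in> A}|M. K (Y k \<omega>) B))"

end

theory Submission imports Defs begin

lemma infnorm_sum_le: "finite S \<Longrightarrow> infnorm (\<Sum>j\<in>S. f j) \<le> (\<Sum>j\<in>S. infnorm (f j :: real^'N))"
  by (induction S rule: finite_induct) (auto simp: infnorm_0 intro: order_trans[OF infnorm_triangle])

lemma gmax_ge: "j \<le> n \<Longrightarrow> infnorm (snd st j) \<le> gmax n st"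
  unfolding gmax_def by (rule Max_ge) auto

lemma gmax_le: "(\<And>j. j \<le> n \<Longrightarrow> infnorm (snd st j) \<le> c) \<Longrightarrow> gmax n st \<le> c"
  unfolding gmax_def by (subst Max_le_iff) auto

lemma avg_bound:
  fixes v :: "nat \<Rightarrow> real^'N"
  assumes X: "(\<psi>, v) \<in> Xset n" and i: "i < n" and pi: "\<psi> i = 1" and s: "psize n \<psi> > 1"
  shows "infnorm (v n - (1 / (real (psize n \<psi>) - 1)) *\<^sub>R (v i - v n)) \<le> gmax n (\<psi>, v)"
proof -
  let ?s = "psize n \<psi>"
  define T where "T = {..<n} - {i}"
  define G where "G = gmax n (\<psi>, v)"
  have fin: "finite T" by (simp add: T_def)
  have psi01: "\<And>j. j < n \<Longrightarrow> \<psi> j \<in> {0,1}" using X by (auto simp: Xset_def Psi_def PiE_def)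
  have split: "{..<n} = insert i T" "i \<notin> T" using i by (auto simp: T_def)
  have c: "(\<Sum>j<n. real (\<psi> j) *\<^sub>R (v j - v n)) = 0" using X by (simp add: Xset_def)
  hence c1: "(v i - v n) + (\<Sum>j\<in>T. real (\<psi> j) *\<^sub>R (v j - v n)) = 0"
    using split fin pi by simp
  have c2: "(\<Sum>j\<in>T. real (\<psi> j) *\<^sub>R (v j - v n)) = - (v i - v n)"
    using c1 by (metis add.commute eq_neg_iff_add_eq_0)
  have sT: "(\<Sum>j\<in>T. real (\<psi> j)) = real ?s - 1"
  proof -
    have "?s = \<psi> i + (\<Sum>j\<in>T. \<psi> j)" using split fin by (simp add: psize_def)
    hence "real ?s = 1 + (\<Sum>j\<in>T. real (\<psi> j))" using pi by simp
    thus ?thesis by simp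
  qed
  have spos: "real ?s - 1 > 0" using s by simp
  have w: "v n - (1 / (real ?s - 1)) *\<^sub>R (v i - v n) = (1 / (real ?s - 1)) *\<^sub>R (\<Sum>j\<in>T. real (\<psi> j) *\<^sub>R v j)"
  proof -
    have "(\<Sum>j\<in>T. real (\<psi> j) *\<^sub>R v j) = (\<Sum>j\<in>T. real (\<psi> j) *\<^sub>R (v j - v n)) + (\<Sum>j\<in>T. real (\<psi> j)) *\<^sub>R v n"
      by (simp add: scaleR_diff_right sum.distrib[symmetric] scaleR_sum_left)
    also have "\<dots> = - (v i - v n) + (real ?s - 1) *\<^sub>R v n" using c2 sT by simp
    finally have "(1 / (real ?s - 1)) *\<^sub>R (\<Sum>j\<in>T. real (\<psi> j) *\<^sub>R v j) = (1 / (real ?s - 1)) *\<^sub>R (- (v i - v n)) + v n"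
      using spos by (simp add: scaleR_add_right)
    thus ?thesis by (simp add: scaleR_minus_right algebra_simps)
  qed
  have "infnorm (\<Sum>j\<in>T. real (\<psi> j) *\<^sub>R v j) \<le> (\<Sum>j\<in>T. infnorm (real (\<psi> j) *\<^sub>R v j))"
    by (rule infnorm_sum_le[OF fin])
  also have "\<dots> \<le> (\<Sum>j\<in>T. real (\<psi> j) * G)"
  proof (rule sum_mono)
    fix j assume "j \<in> T"
    hence "j \<le> n" by (auto simp: T_def)
    from gmax_ge[OF this, of "(\<psi>, v)"] show "infnorm (real (\<psi> j) *\<^sub>R v j) \<le> real (\<psi> j) * G"
      by (simp add: infnorm_mul G_def mult_left_mono)
  qed
  also have "\<dots> = (real ?s - 1) * G" using sT by (simp add: sum_distrib_right[symmetric])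
  finally have "infnorm (\<Sum>j\<in>T. real (\<psi> j) *\<^sub>R v j) \<le> (real ?s - 1) * G" .
  hence "(1 / (real ?s - 1)) * infnorm (\<Sum>j\<in>T. real (\<psi> j) *\<^sub>R v j) \<le> (1 / (real ?s - 1)) * ((real ?s - 1) * G)"
    using spos by (intro mult_left_mono) auto
  also have "\<dots> = G" using spos by simp
  finally have fin2: "(1 / (real ?s - 1)) * infnorm (\<Sum>j\<in>T. real (\<psi> j) *\<^sub>R v j) \<le> G" .
  have ab: "\<bar>1 / (real ?s - 1)\<bar> = 1 / (real ?s - 1)" using spos by (intro abs_of_pos) simp
  show ?thesis unfolding w G_def[symmetric] infnorm_mul ab by (rule fin2)
qed

lemma step_bound:
  fixes st :: "(nat \<Rightarrow> nat) \<times> (nat \<Rightarrow> real^'N)"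
  assumes X: "st \<in> Xset n" and i: "i < n" and x: "infnorm x \<le> R" and R: "R \<ge> 0"
  shows "gmax n (step n i st x) \<le> gmax n st + R"
proof -
  obtain \<psi> v where st: "st = (\<psi>, v)" by (cases st)
  let ?s = "psize n \<psi>"
  define G where "G = gmax n st"
  have vG: "\<And>j. j \<le> n \<Longrightarrow> infnorm (v j) \<le> G" using gmax_ge[of _ n st] by (simp add: st G_def)
  show ?thesis
  proof (cases "\<psi> i = 1 \<and> ?s = 1")
    case True
    have e: "step n i st x = (flip i \<psi>, v)" using True by (simp add: step_def st Let_def)
    have "gmax n (flip i \<psi>, v) = gmax n st" by (simp add: gmax_def st)
    thus ?thesis unfolding e using R by simp
  next
    case F1: False
    show ?thesis
    proof (cases "\<psi> i = 1 \<and> ?s > 1")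
      case True
      define w where "w = v n - (1 / (real ?s - 1)) *\<^sub>R (v i - v n)"
      have a: "infnorm w \<le> G"
        using avg_bound[OF X[unfolded st] i] True by (simp add: G_def st w_def)
      have e: "step n i st x = (flip i \<psi>, v(n := w))"
        using True by (simp add: step_def st Let_def w_def)
      show ?thesis unfolding e G_def[symmetric]
      proof (rule gmax_le)
        fix j assume "j \<le> n"
        thus "infnorm (snd (flip i \<psi>, v(n := w)) j) \<le> G + R"
          using a vG[of j] R by (cases "j = n") auto
      qed
    next
      case F2: False
      have in_: "i \<noteq> n" using i by simp
      define w1 where "w1 = x + v n"
      define w2 where "w2 = (1 / (real ?s + 1)) *\<^sub>R x + v n"
      have b1: "infnorm w1 \<le> G + R" using infnorm_triangle[of x "v n"] vG[of n] x by (simp add: w1_def)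
      have b2: "infnorm w2 \<le> G + R"
      proof -
        have "infnorm ((1 / (real ?s + 1)) *\<^sub>R x) \<le> R"
        proof -
          have q: "\<bar>1 / (real ?s + 1)\<bar> \<le> 1" by simp
          have "\<bar>1 / (real ?s + 1)\<bar> * infnorm x \<le> 1 * infnorm x"
            by (rule mult_right_mono[OF q infnorm_pos_le])
          thus ?thesis using x unfolding infnorm_mul by linarith
        qed
        thus ?thesis using infnorm_triangle[of "(1 / (real ?s + 1)) *\<^sub>R x" "v n"] vG[of n] by (simp add: w2_def)
      qed
      have e: "step n i st x = (flip i \<psi>, v(i := w1, n := w2))"
        using F1 F2 unfolding step_def st Let_def w1_def w2_def fst_conv snd_conv by (simp only: if_False)
      show ?thesis unfolding e G_def[symmetric]
      proof (rule gmax_le)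
        fix j assume "j \<le> n"
        thus "infnorm (snd (flip i \<psi>, v(i := w1, n := w2)) j) \<le> G + R"
          using b1 b2 vG[of j] R by (cases "j = n"; cases "j = i") auto
      qed
    qed
  qed
qed



lemma gmax_meas[measurable]: "gmax n \<in> borel_measurable (SX n)"
  unfolding SX_def gmax_def
  apply (rule measurable_restrict_space1)
  apply (rule borel_measurable_Max, simp)
  apply (rule measurable_compose[where f="\<lambda>st. snd st _"])
   apply (rule measurable_compose[OF measurable_snd])
   apply (rule measurable_component_singleton, simp)
  apply (rule borel_measurable_continuous_onI)
  apply (intro continuous_at_imp_continuous_on ballI continuous_infnorm continuous_ident)
  done

lemma null_step:
  assumes "st \<in> Xset n" "gmax n st \<le> c" "i < n" "R \<ge> 0"
    and ae: "AE x in \<eta>. infnorm x \<le> R"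
  shows "measure \<eta> {x \<in> space \<eta>. step n i st x \<in> {y \<in> space (SX n). gmax n y > c + R}} = 0"
proof -
  from ae obtain N where N: "N \<in> null_sets \<eta>" "{x\<in>space \<eta>. \<not> infnorm x \<le> R} \<subseteq> N"
    by (rule AE_E) auto
  let ?S = "{x \<in> space \<eta>. step n i st x \<in> {y \<in> space (SX n). gmax n y > c + R}}"
  have sub: "?S \<subseteq> N"
  proof
    fix x assume x: "x \<in> ?S"
    show "x \<in> N"
    proof (rule ccontr)
      assume "x \<notin> N"
      with N x have "infnorm x \<le> R" by auto
      from step_bound[OF assms(1,3) this assms(4)] assms(2) x show False by auto
    qed
  qed
  show ?thesis
  proof (cases "?S \<in> sets \<eta>")
    case True
    with null_sets_subset[OF N(1) True sub] show ?thesis by (simp add: measure_eq_0_null_sets)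
  next
    case False thus ?thesis by (rule measure_notin_sets)
  qed
qed

lemma one_step:
  fixes \<theta>a \<theta>d R :: real and n :: nat
    and \<eta> :: "(real^'N) measure"
    and \<rho> :: "((nat \<Rightarrow> nat) \<times> (nat \<Rightarrow> real^'N)) measure"
    and M :: "'w measure"
    and Y :: "nat \<Rightarrow> 'w \<Rightarrow> (nat \<Rightarrow> nat) \<times> (nat \<Rightarrow> real^'N)"
    and k :: nat
  assumes "R \<ge> 0" and ae: "AE x in \<eta>. infnorm x \<le> R"
    and mp: "markov_process M (SX n) (kernel \<theta>a \<theta>d \<eta> n) \<rho> Y"
  shows "AE \<omega> in M. gmax n (Y (Suc k) \<omega>) \<le> gmax n (Y k \<omega>) + R"
proof -
  have P: "prob_space M" and Ym[measurable]: "\<And>j. Y j \<in> M \<rightarrow>\<^sub>M SX n"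
    and eq: "\<And>k A B. A \<in> sets (\<Pi>\<^sub>M i\<in>{..k}. SX n) \<Longrightarrow> B \<in> sets (SX n) \<Longrightarrow>
        measure M {\<omega> \<in> space M. (\<lambda>i\<in>{..k}. Y i \<omega>) \<in> A \<and> Y (Suc k) \<omega> \<in> B} =
        (LINT \<omega>:{\<omega> \<in> space M. (\<lambda>i\<in>{..k}. Y i \<omega>) \<in> A}|M. kernel \<theta>a \<theta>d \<eta> n (Y k \<omega>) B)"
    using mp unfolding markov_process_def by auto
  interpret prob_space M by (rule P)
  define A where "A q = {f \<in> space (\<Pi>\<^sub>M i\<in>{..k}. (SX n :: ((nat \<Rightarrow> nat) \<times> (nat \<Rightarrow> real^'N)) measure)). gmax n (f k) \<le> real_of_rat q}" for q
  define B where "B q = {y \<in> space (SX n :: ((nat \<Rightarrow> nat) \<times> (nat \<Rightarrow> real^'N)) measure). gmax n y > real_of_rat q + R}" for q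
  have Ys: "\<And>j \<omega>. \<omega> \<in> space M \<Longrightarrow> Y j \<omega> \<in> Xset n"
    using measurable_space[OF Ym] by (auto simp: SX_def space_restrict_space)
  have Asets: "A q \<in> sets (\<Pi>\<^sub>M i\<in>{..k}. SX n)" for q
    unfolding A_def by measurable
  have Bsets: "B q \<in> sets (SX n)" for q
    unfolding B_def by measurable
  have key: "AE \<omega> in M. \<not> ((\<lambda>i\<in>{..k}. Y i \<omega>) \<in> A q \<and> Y (Suc k) \<omega> \<in> B q)" for q
  proof -
    let ?E = "{\<omega> \<in> space M. (\<lambda>i\<in>{..k}. Y i \<omega>) \<in> A q \<and> Y (Suc k) \<omega> \<in> B q}"
    have Es: "?E \<in> sets M" using Asets Bsets by measurable
    have "measure M ?E = (LINT \<omega>:{\<omega> \<in> space M. (\<lambda>i\<in>{..k}. Y i \<omega>) \<in> A q}|M. kernel \<theta>a \<theta>d \<eta> n (Y k \<omega>) (B q))"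
      by (rule eq[OF Asets Bsets])
    also have "\<dots> = (LINT \<omega>|M. 0)"
      unfolding set_lebesgue_integral_def
    proof (rule Bochner_Integration.integral_cong[OF refl])
      fix \<omega> assume \<omega>: "\<omega> \<in> space M"
      show "indicator {\<omega> \<in> space M. (\<lambda>i\<in>{..k}. Y i \<omega>) \<in> A q} \<omega> *\<^sub>R kernel \<theta>a \<theta>d \<eta> n (Y k \<omega>) (B q) = 0"
      proof (cases "(\<lambda>i\<in>{..k}. Y i \<omega>) \<in> A q")
        case True
        hence g: "gmax n (Y k \<omega>) \<le> real_of_rat q" by (simp add: A_def)
        have z: "\<And>i. i < n \<Longrightarrow> measure \<eta> {x\<in>space \<eta>. step n i (Y k \<omega>) x \<in> B q} = 0"
          unfolding B_def by (rule null_step[OF Ys[OF \<omega>] g _ assms(1) ae])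
        have "kernel \<theta>a \<theta>d \<eta> n (Y k \<omega>) (B q) = 0"
          unfolding kernel_def by (rule sum.neutral) (simp add: z)
        thus ?thesis by simp
      qed simp
    qed
    finally have "measure M ?E = 0" by simp
    hence "?E \<in> null_sets M" using Es by (intro null_setsI) (simp_all add: emeasure_eq_measure)
    thus ?thesis by (subst AE_iff_null) (use Es in auto)
  qed
  hence "AE \<omega> in M. \<forall>q. \<not> ((\<lambda>i\<in>{..k}. Y i \<omega>) \<in> A q \<and> Y (Suc k) \<omega> \<in> B q)"
    by (subst AE_all_countable) auto
  thus ?thesis
  proof (rule AE_mp[OF _ AE_I2], intro impI)
    fix \<omega> assume \<omega>: "\<omega> \<in> space M" and H: "\<forall>q. \<not> ((\<lambda>i\<in>{..k}. Y i \<omega>) \<in> A q \<and> Y (Suc k) \<omega> \<in> B q)"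
    show "gmax n (Y (Suc k) \<omega>) \<le> gmax n (Y k \<omega>) + R"
    proof (rule ccontr)
      assume "\<not> ?thesis"
      hence "gmax n (Y k \<omega>) < gmax n (Y (Suc k) \<omega>) - R" by simp
      then obtain r where r: "r \<in> \<rat>" "gmax n (Y k \<omega>) < r" "r < gmax n (Y (Suc k) \<omega>) - R"
        using Rats_dense_in_real by blast
      from r(1) obtain q where q: "r = real_of_rat q" by (auto elim: Rats_cases)
      have "(\<lambda>i\<in>{..k}. Y i \<omega>) \<in> space (\<Pi>\<^sub>M i\<in>{..k}. SX n)"
        using measurable_space[OF Ym] \<omega> by (auto simp: space_PiM)
      hence "(\<lambda>i\<in>{..k}. Y i \<omega>) \<in> A q" using r q by (simp add: A_def)
      moreover have "Y (Suc k) \<omega> \<in> B q" using r q measurable_space[OF Ym \<omega>] by (simp add: B_def)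
      ultimately show False using H by blast
    qed
  qed
qed

theorem lemma3:
  fixes \<theta>a \<theta>d R :: real and n :: nat
    and \<eta> :: "(real^'N) measure"
    and \<rho> :: "((nat \<Rightarrow> nat) \<times> (nat \<Rightarrow> real^'N)) measure"
    and M :: "'w measure"
    and Y :: "nat \<Rightarrow> 'w \<Rightarrow> (nat \<Rightarrow> nat) \<times> (nat \<Rightarrow> real^'N)"
    and k :: nat
  assumes "\<theta>a > 0" and "\<theta>d > 0" and "n > 0"
    and "prob_space \<eta>" and "sets \<eta> = sets borel"
    and "integrable \<eta> (\<lambda>x. x)"
    and "R > 0" and "AE x in \<eta>. infnorm x \<le> R"
    and "prob_space \<rho>" and "sets \<rho> = sets (SX n)"
    and "markov_process M (SX n) (kernel \<theta>a \<theta>d \<eta> n) \<rho> Y"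
  shows "(AE \<omega> in M. gmax n (Y (Suc k) \<omega>) \<le> gmax n (Y k \<omega>) + R)
       \<and> (AE \<omega> in M. gmax n (Y k \<omega>) \<le> gmax n (Y 0 \<omega>) + real k * R)"
proof -
  have R0: "R \<ge> 0" using assms(7) by simp
  have "\<And>j. AE \<omega> in M. gmax n (Y (Suc j) \<omega>) \<le> gmax n (Y j \<omega>) + R"
    by (rule one_step[OF R0 assms(8) assms(11)])
  hence all: "AE \<omega> in M. \<forall>j. gmax n (Y (Suc j) \<omega>) \<le> gmax n (Y j \<omega>) + R"
    by (subst AE_all_countable) auto
  have "AE \<omega> in M. gmax n (Y k \<omega>) \<le> gmax n (Y 0 \<omega>) + real k * R"
    using all
  proof (rule eventually_mono)
    fix \<omega> assume H: "\<forall>j. gmax n (Y (Suc j) \<omega>) \<le> gmax n (Y j \<omega>) + R"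
    show "gmax n (Y k \<omega>) \<le> gmax n (Y 0 \<omega>) + real k * R"
    proof (induction k)
      case 0 thus ?case by simp
    next
      case (Suc k) thus ?case using H[rule_format, of k] by (simp add: algebra_simps)
    qed
  qed
  thus ?thesis using \<open>\<And>j. AE \<omega> in M. gmax n (Y (Suc j) \<omega>) \<le> gmax n (Y j \<omega>) + R\<close> by blast
qed

end
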